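(* Let $f\in\mathcal{F}(\Delta,L)$ with $x_1=x_0$, let the stochastic oracle have variance at most $\sigma^2$, and let $G=\sqrt{L^2+\sigma^2}$. Run Stochastic INGD (described in the context) with parameters $\beta\in(0,1)$, $p>0$, $q>0$ satisfying $\frac{pG}{q}\le\frac{\beta}{2}$. Then for every $T\ge1$, $$\frac1T\sum_{t=1}^T\mathbb{E}\Big[\frac{q\|m_t\|^2}{p\|m_t\|+q}\Big]\le\frac{4q\Delta}{T}+\frac{2\beta G^2}{T(1-\beta)}+\frac{2(1-\beta)G^2}{\beta}.$$
   Context: $\mathcal{F}(\Delta,L)$: $L$-Lipschitz, everywhere Hadamard directionally differentiable $f:\mathbb{R}^n\to\mathbb{R}$ with $f(x_0)-\inf f\le\Delta$. Hadamard directional derivative: $f'(x;d)=\lim_{t\to0^+}(f(\varphi(t))-f(x))/t$ for all $\varphi$ with $\varphi(0)=x$, $\lim_{t\to 0^+}(\varphi(t)-x)/t=d$. Stochastic oracle: $\mathbb{O}(x,d)$ returns (with fresh randomness, independent of the past given the query) a random vector $g$ with $\mathbb{E}[g]=g_x$, where $g_x\in\partial f(x)$ (Clarke generalized gradient) satisfies $\langle g_x,d\rangle=f'(x;d)$, and $\mathbb{E}\|g-g_x\|^2\le\sigma^2$; no function values are returned. Stochastic INGD$(x_1,p,q,\beta,T,K)$: set $m_1$ to the output of $\mathbb{O}(x_1,0)$; for $t=1,\dots,T$: $x_{t+1}=x_t-\eta_t m_t$ with $\eta_t=\frac{1}{p\|m_t\|+q}$; sample $y_{t+1}$ uniformly on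 the segment $[x_t,x_{t+1}]$; let $g(y_{t+1})$ be the output of $\mathbb{O}(y_{t+1},-m_t)$; set $m_{t+1}=\beta m_t+(1-\beta)g(y_{t+1})$. Finally sample $i$ uniformly from $\{1,\dots,T\}$ and return $x_{\max\{i-K,1\}}$. *)

theory Defs
  imports "HOL-Analysis.Analysis" "HOL-Probability.Probability"
begin

definition has_hadamard_dd :: "('a::real_normed_vector \<Rightarrow> real) \<Rightarrow> 'a \<Rightarrow> 'a \<Rightarrow> real \<Rightarrow> bool" where
  "has_hadamard_dd f x d v \<longleftrightarrow>
     (\<forall>\<phi>. \<phi> 0 = x \<longrightarrow> ((\<lambda>t. (1 / t) *\<^sub>R (\<phi> t - x)) \<longlongrightarrow> d) (at_right 0) \<longrightarrow>
          ((\<lambda>t. (f (\<phi> t) - f x) / t) \<longlongrightarrow> v) (at_right 0))"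

definition hadamard_dir_differentiable :: "('a::real_normed_vector \<Rightarrow> real) \<Rightarrow> bool" where
  "hadamard_dir_differentiable f \<longleftrightarrow> (\<forall>x d. \<exists>v. has_hadamard_dd f x d v)"

definition clarke_dd :: "('a::real_normed_vector \<Rightarrow> real) \<Rightarrow> 'a \<Rightarrow> 'a \<Rightarrow> ereal" where
  "clarke_dd f x d = Limsup (nhds x \<times>\<^sub>F at_right (0::real))
       (\<lambda>(y, t). ereal ((f (y + t *\<^sub>R d) - f y) / t))"

definition clarke_subdiff :: "('a::real_inner \<Rightarrow> real) \<Rightarrow> 'a \<Rightarrow> 'a set" where
  "clarke_subdiff f x = {g. \<forall>d. ereal (g \<bullet> d) \<le> clarke_dd f x d}"

definition ingd_step ::
  "('a::euclidean_space \<Rightarrow> 'a \<Rightarrow> 'a measure) \<Rightarrow> real \<Rightarrow> real \<Rightarrow> real \<Rightarrow> 'a \<times> 'a \<Rightarrow> ('a \<times> 'a) measure" where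
  "ingd_step Orc p q \<beta> s =
     (let x = fst s; m = snd s; x' = x - (1 / (p * norm m + q)) *\<^sub>R m in
      uniform_measure lborel {0..1::real} \<bind> (\<lambda>u.
        Orc (x + u *\<^sub>R (x' - x)) (- m) \<bind> (\<lambda>g.
          return borel (x', \<beta> *\<^sub>R m + (1 - \<beta>) *\<^sub>R g))))"

text \<open>ingd_state Orc p q beta x1 n is the joint law of (x_{n+1}, m_{n+1}), i.e. index n = t - 1.
  m_1 is the output of Orc(x_1, 0).\<close>
fun ingd_state ::
  "('a::euclidean_space \<Rightarrow> 'a \<Rightarrow> 'a measure) \<Rightarrow> real \<Rightarrow> real \<Rightarrow> real \<Rightarrow> 'a \<Rightarrow> nat \<Rightarrow> ('a \<times> 'a) measure" where
  "ingd_state Orc p q \<beta> x1 0 = distr (Orc x1 0) borel (\<lambda>g. (x1, g))"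
| "ingd_state Orc p q \<beta> x1 (Suc n) = ingd_state Orc p q \<beta> x1 n \<bind> ingd_step Orc p q \<beta>"

end

theory Submission
  imports Defs
begin


lemma step_meas:
  fixes Orc :: "'a::euclidean_space \<Rightarrow> 'a \<Rightarrow> 'a measure"
  assumes orc_meas: "(\<lambda>(x, d). Orc x d) \<in> borel \<rightarrow>\<^sub>M prob_algebra borel"
  shows "ingd_step Orc p q \<beta> \<in> borel \<rightarrow>\<^sub>M prob_algebra borel"
proof -
  have U: "uniform_measure lborel {0..1::real} \<in> space (prob_algebra borel)"
    by (auto simp: space_prob_algebra intro!: prob_space_uniform_measure)
  have O: "(\<lambda>x. Orc (fst x) (snd x)) \<in> borel \<Otimes>\<^sub>M borel \<rightarrow>\<^sub>M prob_algebra borel"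
    using orc_meas by (simp add: case_prod_beta' borel_prod)
  have B1: "(\<lambda>x. (fst (fst x) + snd x *\<^sub>R ((fst (fst x) - (1 / (p * norm (snd (fst x)) + q)) *\<^sub>R snd (fst x)) - fst (fst x)), - snd (fst x)))
     \<in> ((borel \<Otimes>\<^sub>M borel) \<Otimes>\<^sub>M (borel::real measure)) \<rightarrow>\<^sub>M (borel \<Otimes>\<^sub>M borel :: ('a \<times> 'a) measure)"
    by measurable
  have B2: "(\<lambda>x. (fst (fst (fst x)) - (1 / (p * norm (snd (fst (fst x))) + q)) *\<^sub>R snd (fst (fst x)),
                \<beta> *\<^sub>R snd (fst (fst x)) + (1 - \<beta>) *\<^sub>R snd x))
     \<in> (((borel \<Otimes>\<^sub>M borel) \<Otimes>\<^sub>M (borel::real measure)) \<Otimes>\<^sub>M borel) \<rightarrow>\<^sub>M (borel :: ('a \<times> 'a) measure)"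
    unfolding borel_prod[symmetric] by measurable
  have C1: "(\<lambda>x. Orc (fst (fst x) + snd x *\<^sub>R ((fst (fst x) - (1 / (p * norm (snd (fst x)) + q)) *\<^sub>R snd (fst x)) - fst (fst x))) (- snd (fst x)))
     \<in> ((borel \<Otimes>\<^sub>M borel) \<Otimes>\<^sub>M (borel::real measure)) \<rightarrow>\<^sub>M prob_algebra borel"
    using measurable_compose[OF B1 O] by simp
  have C2: "(\<lambda>x. return borel (fst (fst (fst x)) - (1 / (p * norm (snd (fst (fst x))) + q)) *\<^sub>R snd (fst (fst x)),
                \<beta> *\<^sub>R snd (fst (fst x)) + (1 - \<beta>) *\<^sub>R snd x))
     \<in> (((borel \<Otimes>\<^sub>M borel) \<Otimes>\<^sub>M (borel::real measure)) \<Otimes>\<^sub>M borel) \<rightarrow>\<^sub>M prob_algebra (borel :: ('a \<times> 'a) measure)"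
    using measurable_compose[OF B2 measurable_return_prob_space] by simp
  have "ingd_step Orc p q \<beta> \<in> borel \<Otimes>\<^sub>M borel \<rightarrow>\<^sub>M prob_algebra borel"
    unfolding ingd_step_def Let_def
    apply (rule measurable_bind_prob_space2[where N=borel])
     apply (rule measurable_const[OF U])
    apply (simp only: case_prod_unfold)
    apply (rule measurable_bind_prob_space2[where N=borel])
     apply (rule C1)
    apply (simp only: case_prod_unfold)
    apply (rule C2)
    done
  then show ?thesis by (metis borel_prod)
qed


lemma seq_at_right: "filterlim (\<lambda>n::nat. 1 / real (Suc n)) (at_right (0::real)) sequentially"
proof (rule tendsto_imp_filterlim_at_right)
  show "(\<lambda>n::nat. 1 / real (Suc n)) \<longlonglongrightarrow> 0"
    using LIMSEQ_inverse_real_of_nat by (simp add: inverse_eq_divide)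
  show "\<forall>\<^sub>F n in sequentially. 0 < 1 / real (Suc n)" by simp
qed

lemma ftc_right:
  fixes \<phi> D :: "real \<Rightarrow> real"
  assumes lip: "\<And>a b. \<bar>\<phi> a - \<phi> b\<bar> \<le> K * \<bar>a - b\<bar>"
    and der: "\<And>u. u \<in> {0..1} \<Longrightarrow> ((\<lambda>t. (\<phi> (u + t) - \<phi> u) / t) \<longlongrightarrow> D u) (at_right 0)"
  shows "(D has_integral (\<phi> 1 - \<phi> 0)) {0..1}"
proof -
  have K0: "0 \<le> K" using lip[of 1 0] abs_ge_zero[of "\<phi> 1 - \<phi> 0"] by simp
  have cont: "continuous_on UNIV \<phi>"
  proof (rule continuous_onI)
    fix x e :: real assume e: "0 < e"
    show "\<exists>d>0. \<forall>x'\<in>UNIV. dist x' x < d \<longrightarrow> dist (\<phi> x') (\<phi> x) \<le> e"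
    proof (intro exI[of _ "e / (K + 1)"] conjI ballI impI)
      show "0 < e / (K + 1)" using e K0 by simp
      fix x' assume "dist x' x < e / (K + 1)"
      then have "\<bar>x' - x\<bar> * (K+1) < e" using K0 by (simp add: dist_real_def field_simps)
      moreover have "\<bar>\<phi> x' - \<phi> x\<bar> \<le> K * \<bar>x' - x\<bar>" by (rule lip)
      moreover have "K * \<bar>x' - x\<bar> \<le> \<bar>x' - x\<bar> * (K+1)" by (simp add: algebra_simps)
      ultimately show "dist (\<phi> x') (\<phi> x) \<le> e" by (simp add: dist_real_def)
    qed
  qed
  define A where "A v = integral {-1..v} \<phi>" for v
  have dA: "(A has_real_derivative \<phi> v) (at v)" if "v \<in> {-1<..<3}" for v
  proof -
    have "(A has_real_derivative \<phi> v) (at v within {-1..3})"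
      unfolding A_def
      by (rule integral_has_real_derivative) (use cont that in \<open>auto intro: continuous_on_subset\<close>)
    moreover have "at v within {-1..3} = at v"
      using that by (intro at_within_interior) auto
    ultimately show ?thesis by simp
  qed
  define h where "h k = 1 / real (Suc k)" for k
  define Q where "Q k u = (\<phi> (u + h k) - \<phi> u) / h k" for k u
  have hpos: "0 < h k" "h k \<le> 1" for k unfolding h_def by (auto simp: field_simps)
  have intQ: "(Q k has_integral ((A (1 + h k) - A 1) / h k - (A (h k) - A 0) / h k)) {0..1}" for k
  proof -
    have d1: "((\<lambda>u. A (u + h k)) has_vector_derivative \<phi> (u + h k)) (at u within {0..1})"
      if "u \<in> {0..1}" for u
    proof -
      have "(A has_real_derivative \<phi> (u + h k)) (at (u + h k))"
        using that hpos[of k] by (intro dA) auto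
      then have "((\<lambda>u. A (u + h k)) has_real_derivative \<phi> (u + h k)) (at u)"
        by (simp add: DERIV_shift)
      then show ?thesis
        by (simp add: has_real_derivative_iff_has_vector_derivative has_vector_derivative_at_within)
    qed
    have d2: "(A has_vector_derivative \<phi> u) (at u within {0..1})" if "u \<in> {0..1}" for u
      using dA[of u] that
      by (simp add: has_real_derivative_iff_has_vector_derivative has_vector_derivative_at_within)
    have i1: "((\<lambda>u. \<phi> (u + h k)) has_integral (A (1 + h k) - A (0 + h k))) {0..1}"
      using fundamental_theorem_of_calculus[of 0 1 "\<lambda>u. A (u + h k)" "\<lambda>u. \<phi> (u + h k)"] d1 by simp
    have i2: "(\<phi> has_integral (A 1 - A 0)) {0..1}"
      using fundamental_theorem_of_calculus[of 0 1 A \<phi>] d2 by simp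
    have "((\<lambda>u. (\<phi> (u + h k) - \<phi> u) / h k) has_integral ((A (1 + h k) - A (0 + h k)) - (A 1 - A 0)) / h k) {0..1}"
      using has_integral_diff[OF i1 i2] by (rule has_integral_divide)
    moreover have "Q k = (\<lambda>u. (\<phi> (u + h k) - \<phi> u) / h k)" by (rule ext) (simp add: Q_def)
    moreover have "(A (1 + h k) - A 1) / h k - (A (h k) - A 0) / h k = (A (1 + h k) - A (0 + h k) - (A 1 - A 0)) / h k"
      by (simp add: diff_divide_distrib)
    ultimately show ?thesis by simp
  qed
  have hlim: "filterlim h (at 0) sequentially"
    using seq_at_right unfolding h_def by (rule filterlim_mono) (simp_all add: at_within_le_at)
  have lim_at: "(\<lambda>k. (A (a + h k) - A a) / h k) \<longlonglongrightarrow> \<phi> a" if "a \<in> {-1<..<3}" for a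
  proof -
    have "((\<lambda>t. (A (a + t) - A a) / t) \<longlongrightarrow> \<phi> a) (at 0)"
      using dA[OF that] by (simp add: DERIV_def)
    from filterlim_compose[OF this hlim] show ?thesis by simp
  qed
  have ylim: "(\<lambda>k. (A (1 + h k) - A 1) / h k - (A (h k) - A 0) / h k) \<longlonglongrightarrow> \<phi> 1 - \<phi> 0"
    using tendsto_diff[OF lim_at[of 1] lim_at[of 0]] by simp
  show ?thesis
  proof (rule has_integral_dominated_convergence[OF intQ _ _ _ ylim])
    show "(\<lambda>u::real. K) integrable_on {0..1}" by (rule integrable_const_ivl)
    show "\<forall>x\<in>{0..1}. norm (Q k x) \<le> K" for k
    proof
      fix x
      have "\<bar>\<phi> (x + h k) - \<phi> x\<bar> \<le> K * h k" using lip[of "x + h k" x] hpos[of k] by simp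
      then show "norm (Q k x) \<le> K" using hpos[of k] by (simp add: Q_def abs_divide divide_le_eq)
    qed
    show "\<forall>x\<in>{0..1}. (\<lambda>k. Q k x) \<longlonglongrightarrow> D x"
    proof
      fix x assume "x \<in> {0..1::real}"
      from filterlim_compose[OF der[OF this] seq_at_right] show "(\<lambda>k. Q k x) \<longlonglongrightarrow> D x"
        unfolding Q_def h_def by simp
    qed
  qed
qed


definition Psi :: "real \<Rightarrow> real \<Rightarrow> real \<Rightarrow> real" where
  "Psi p q r = (2 / p) * r - (2 * q / p\<^sup>2) * ln (1 + p * r / q)"

lemma Psi_deriv:
  assumes "0 < p" "0 < q" "0 \<le> s"
  shows "(Psi p q has_real_derivative (2 * s / (p * s + q))) (at s)"
proof -
  have pos: "0 < 1 + p * s / q" using assms by (simp add: add_pos_nonneg)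
  have "((\<lambda>r. 1 + (p / q) * r) has_real_derivative (0 + (p / q) * 1)) (at s)"
    by (intro DERIV_add DERIV_const DERIV_cmult DERIV_ident)
  then have d1: "((\<lambda>r. 1 + p * r / q) has_real_derivative (p / q)) (at s)" by simp
  have d2: "((\<lambda>r. ln (1 + p * r / q)) has_real_derivative (inverse (1 + p * s / q) * (p / q))) (at s)"
    by (rule DERIV_chain2[OF DERIV_ln[OF pos] d1])
  have d3: "((\<lambda>r. (2 / p) * r) has_real_derivative (2 / p) * 1) (at s)"
    by (rule DERIV_cmult[OF DERIV_ident])
  have "(Psi p q has_real_derivative ((2 / p) * 1 - (2 * q / p\<^sup>2) * (inverse (1 + p * s / q) * (p / q)))) (at s)"
    unfolding Psi_def[abs_def] by (intro DERIV_diff d3 DERIV_cmult d2)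
  moreover have "(2 * q / p\<^sup>2) * (inverse (1 + p * s / q) * (p / q)) = (2 * q / p\<^sup>2) * ((p / q) / (1 + p * s / q))"
    by (simp add: divide_inverse mult_ac)
  ultimately have "(Psi p q has_real_derivative ((2 / p) * 1 - (2 * q / p\<^sup>2) * ((p / q) / (1 + p * s / q)))) (at s)"
    by simp
  moreover have "(2 / p) * 1 - (2 * q / p\<^sup>2) * ((p / q) / (1 + p * s / q)) = 2 * s / (p * s + q)"
  proof -
    have qs: "0 < q + p * s" using assms by (intro add_pos_nonneg) auto
    have e1: "(p / q) / (1 + p * s / q) = p / (q + p * s)" using assms by (simp add: field_simps)
    have e2: "(2 * q / p\<^sup>2) * (p / (q + p * s)) = 2 * q / (p * (q + p * s))"
      using assms qs by (simp add: power2_eq_square divide_simps)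
    have e3: "2 / p - 2 * q / (p * (q + p * s)) = 2 * s / (p * s + q)"
      using assms qs by (simp add: divide_simps add.commute)
    show ?thesis by (simp only: e1 e2 mult_1_right e3)
  qed
  ultimately show ?thesis by simp
qed

lemma Psi_0: "Psi p q 0 = 0" by (simp add: Psi_def)

lemma Psi_key:
  assumes p: "0 < p" and q: "0 < q" and r: "0 \<le> r" and r': "0 \<le> r'"
  shows "(r\<^sup>2 - r'\<^sup>2) / (p * r + q) \<le> Psi p q r - Psi p q r'"
proof -
  define c where "c = 1 / (p * r + q)"
  have c: "0 < c" using p q r unfolding c_def by (intro divide_pos_pos add_nonneg_pos) auto
  define g where "g s = Psi p q s - c * s\<^sup>2" for s
  have dg: "(g has_real_derivative (2 * s / (p * s + q) - c * (2 * s))) (at s)" if "0 \<le> s" for s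
  proof -
    have "((\<lambda>s. c * s\<^sup>2) has_real_derivative c * (2 * s)) (at s)"
      using DERIV_cmult[OF DERIV_pow[of 2 s], of c] by simp
    from DERIV_diff[OF Psi_deriv[OF p q that] this] show ?thesis unfolding g_def[abs_def] .
  qed
  have "g r' \<le> g r"
  proof (cases "r' \<le> r")
    case True
    show ?thesis
    proof (rule DERIV_nonneg_imp_nondecreasing[OF True])
      fix s assume s: "r' \<le> s" "s \<le> r"
      have a1: "0 < p * s + q" "0 < p * r + q" using p q s r' by (auto intro!: add_nonneg_pos)
      have "p * s + q \<le> p * r + q" using p s by (simp add: mult_left_mono)
      then have "c \<le> 1 / (p * s + q)" unfolding c_def
        using a1 by (intro divide_left_mono mult_pos_pos) auto
      then have "c * (2 * s) \<le> (1 / (p * s + q)) * (2 * s)" using s r' by (intro mult_right_mono) auto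
      then have "c * (2 * s) \<le> 2 * s / (p * s + q)" by simp
      then show "\<exists>y. (g has_real_derivative y) (at s) \<and> 0 \<le> y"
        using dg[of s] s r' by (intro exI[of _ "2 * s / (p * s + q) - c * (2 * s)"]) auto
    qed
  next
    case False
    then have le: "r \<le> r'" by simp
    show ?thesis
    proof (rule DERIV_nonpos_imp_nonincreasing[OF le])
      fix s assume s: "r \<le> s" "s \<le> r'"
      have a1: "0 < p * s + q" "0 < p * r + q" using p q s r by (auto intro!: add_nonneg_pos)
      have "p * r + q \<le> p * s + q" using p s by (simp add: mult_left_mono)
      then have "1 / (p * s + q) \<le> c" unfolding c_def
        using a1 by (intro divide_left_mono mult_pos_pos) auto
      then have "(1 / (p * s + q)) * (2 * s) \<le> c * (2 * s)" using s r by (intro mult_right_mono) auto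
      then have "2 * s / (p * s + q) \<le> c * (2 * s)" by simp
      then show "\<exists>y. (g has_real_derivative y) (at s) \<and> y \<le> 0"
        using dg[of s] s r by (intro exI[of _ "2 * s / (p * s + q) - c * (2 * s)"]) auto
    qed
  qed
  then show ?thesis unfolding g_def c_def by (simp add: diff_divide_distrib)
qed

lemma Psi_nonneg:
  assumes p: "0 < p" and q: "0 < q" and r: "0 \<le> r"
  shows "0 \<le> Psi p q r"
proof -
  have "Psi p q 0 \<le> Psi p q r"
  proof (rule DERIV_nonneg_imp_nondecreasing[OF r])
    fix s :: real assume s: "0 \<le> s" "s \<le> r"
    then show "\<exists>y. (Psi p q has_real_derivative y) (at s) \<and> 0 \<le> y"
      using Psi_deriv[OF p q s(1)] p q by (intro exI[of _ "2 * s / (p * s + q)"]) (auto intro!: divide_nonneg_pos add_pos_nonneg)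
  qed
  then show ?thesis by (simp add: Psi_0)
qed

lemma Psi_le:
  assumes p: "0 < p" and q: "0 < q" and r: "0 \<le> r"
  shows "Psi p q r \<le> r\<^sup>2 / q"
proof -
  define g where "g s = Psi p q s - s\<^sup>2 / q" for s
  have "g r \<le> g 0"
  proof (rule DERIV_nonpos_imp_nonincreasing[OF r])
    fix s :: real assume s: "0 \<le> s" "s \<le> r"
    have dg: "(g has_real_derivative (2 * s / (p * s + q) - 2 * s / q)) (at s)"
    proof -
      have "((\<lambda>s. s\<^sup>2 / q) has_real_derivative 2 * s / q) (at s)"
        using DERIV_cmult[OF DERIV_pow[of 2 s], of "1 / q"] by simp
      then show ?thesis unfolding g_def using Psi_deriv[OF p q s(1)] by (intro DERIV_diff)
    qed
    have "2 * s / (p * s + q) \<le> 2 * s / q"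
      using s p q by (intro divide_left_mono mult_pos_pos add_nonneg_pos) auto
    then show "\<exists>y. (g has_real_derivative y) (at s) \<and> y \<le> 0"
      using dg by (intro exI[of _ "2 * s / (p * s + q) - 2 * s / q"]) auto
  qed
  then show ?thesis by (simp add: g_def Psi_0)
qed



lemma var_bound:
  fixes M :: "'a::euclidean_space measure"
  assumes M: "M \<in> space (prob_algebra borel)" and mu: "has_bochner_integral M (\<lambda>v. v) \<mu>"
    and var: "(\<integral>\<^sup>+v. ennreal ((norm (v - \<mu>))\<^sup>2) \<partial>M) \<le> ennreal (\<sigma>\<^sup>2)"
  shows "integrable M (\<lambda>v. (norm (v - c))\<^sup>2)" "(\<integral>v. (norm (v - c))\<^sup>2 \<partial>M) \<le> (norm (\<mu> - c))\<^sup>2 + \<sigma>\<^sup>2"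
proof -
  have sM: "sets M = sets borel" and P: "prob_space M" using M by (auto simp: space_prob_algebra)
  interpret prob_space M by (rule P)
  have meas: "f \<in> borel_measurable borel \<Longrightarrow> f \<in> borel_measurable M" for f :: "'a \<Rightarrow> real"
    using sM by (simp cong: measurable_cong_sets)
  have iv: "integrable M (\<lambda>v. v)" by (rule integrable.intros[OF mu])
  have ev: "(\<integral>v. v \<partial>M) = \<mu>" using mu by (rule has_bochner_integral_integral_eq)
  have i1: "integrable M (\<lambda>v. (norm (v - \<mu>))\<^sup>2)"
  proof (rule integrableI_bounded)
    show "(\<lambda>v. (norm (v - \<mu>))\<^sup>2) \<in> borel_measurable M" by (rule meas) measurable
    have "(\<integral>\<^sup>+ v. ennreal (norm ((norm (v - \<mu>))\<^sup>2)) \<partial>M) = (\<integral>\<^sup>+v. ennreal ((norm (v - \<mu>))\<^sup>2) \<partial>M)"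
      by simp
    also have "\<dots> < \<infinity>" using var by (simp add: order_le_less_trans)
    finally show "(\<integral>\<^sup>+ v. ennreal (norm ((norm (v - \<mu>))\<^sup>2)) \<partial>M) < \<infinity>" .
  qed
  have v1: "(\<integral>v. (norm (v - \<mu>))\<^sup>2 \<partial>M) \<le> \<sigma>\<^sup>2"
  proof -
    have "ennreal (\<integral>v. (norm (v - \<mu>))\<^sup>2 \<partial>M) = (\<integral>\<^sup>+v. ennreal ((norm (v - \<mu>))\<^sup>2) \<partial>M)"
      by (rule nn_integral_eq_integral[symmetric, OF i1]) simp
    with var show ?thesis by (metis ennreal_le_iff zero_le_power2)
  qed
  have eq: "(norm (v - c))\<^sup>2 = (norm (v - \<mu>))\<^sup>2 + 2 * ((v - \<mu>) \<bullet> (\<mu> - c)) + (norm (\<mu> - c))\<^sup>2" for v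
  proof -
    have sq: "(norm (a + b))\<^sup>2 = (norm a)\<^sup>2 + 2 * (a \<bullet> b) + (norm b)\<^sup>2" for a b :: 'a
      by (simp add: power2_norm_eq_inner inner_add_left inner_add_right inner_commute)
    have "v - c = (v - \<mu>) + (\<mu> - c)" by simp
    then show ?thesis using sq[of "v - \<mu>" "\<mu> - c"] by metis
  qed
  have i2: "integrable M (\<lambda>v. (v - \<mu>) \<bullet> (\<mu> - c))"
    using iv by (intro integrable_inner_left integrable_diff) auto
  have eqf: "(\<lambda>v. (norm (v - c))\<^sup>2) = (\<lambda>v. (norm (v - \<mu>))\<^sup>2 + 2 * ((v - \<mu>) \<bullet> (\<mu> - c)) + (norm (\<mu> - c))\<^sup>2)"
    by (rule ext) (rule eq)
  show i3: "integrable M (\<lambda>v. (norm (v - c))\<^sup>2)"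
  proof -
    have "integrable M (\<lambda>v. (norm (\<mu> - c))\<^sup>2)" by simp
    then show ?thesis unfolding eqf using i1 i2 by (intro Bochner_Integration.integrable_add integrable_mult_right) auto
  qed
  have "(\<integral>v. (v - \<mu>) \<bullet> (\<mu> - c) \<partial>M) = (\<integral>v. v - \<mu> \<partial>M) \<bullet> (\<mu> - c)"
    using iv by (intro integral_inner_left) auto
  also have "(\<integral>v. v - \<mu> \<partial>M) = 0" using iv ev by (simp add: prob_space)
  finally have z: "(\<integral>v. (v - \<mu>) \<bullet> (\<mu> - c) \<partial>M) = 0" by simp
  have "(\<integral>v. (norm (v - c))\<^sup>2 \<partial>M) = (\<integral>v. (norm (v - \<mu>))\<^sup>2 \<partial>M) + 2 * (\<integral>v. (v - \<mu>) \<bullet> (\<mu> - c) \<partial>M) + (norm (\<mu> - c))\<^sup>2"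
    unfolding eqf using i1 i2 by (simp add: prob_space)
  then show "(\<integral>v. (norm (v - c))\<^sup>2 \<partial>M) \<le> (norm (\<mu> - c))\<^sup>2 + \<sigma>\<^sup>2" using z v1 by simp
qed

lemma clarke_norm_le:
  fixes f :: "'a::euclidean_space \<Rightarrow> real"
  assumes lip: "lipschitz_on L UNIV f" and g: "g \<in> clarke_subdiff f x"
  shows "norm g \<le> L"
proof -
  have L: "\<And>a b. dist (f a) (f b) \<le> L * dist a b" using lip by (auto simp: lipschitz_on_def)
  have "clarke_dd f x g \<le> ereal (L * norm g)"
    unfolding clarke_dd_def
  proof (rule Limsup_bounded)
    have ev: "\<forall>\<^sub>F t in at_right (0::real). 0 < t" by (simp add: eventually_at_right_less)
    have E: "eventually (\<lambda>(y, t). 0 < t) (nhds x \<times>\<^sub>F at_right (0::real))"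
      using eventually_prod2[of "nhds x" "\<lambda>t. 0 < t" "at_right (0::real)"] ev by simp
    show "\<forall>\<^sub>F n in nhds x \<times>\<^sub>F at_right 0. (case n of (y, t) \<Rightarrow> ereal ((f (y + t *\<^sub>R g) - f y) / t)) \<le> ereal (L * norm g)"
    proof (rule eventually_mono[OF E])
      fix n :: "'a \<times> real" assume "case n of (y, t) \<Rightarrow> 0 < t"
      moreover obtain y t where n: "n = (y, t)" by (cases n)
      ultimately have t: "0 < t" by simp
      have "f (y + t *\<^sub>R g) - f y \<le> L * dist (y + t *\<^sub>R g) y"
        using L[of "y + t *\<^sub>R g" y] by (simp add: dist_real_def)
      also have "\<dots> = t * (L * norm g)" using t by (simp add: dist_norm)
      finally show "(case n of (y, t) \<Rightarrow> ereal ((f (y + t *\<^sub>R g) - f y) / t)) \<le> ereal (L * norm g)"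
        using t n by (simp add: divide_le_eq mult.commute)
    qed
  qed
  moreover have "ereal (g \<bullet> g) \<le> clarke_dd f x g" using g by (simp add: clarke_subdiff_def)
  ultimately have "g \<bullet> g \<le> L * norm g" by (metis ereal_less_eq(3) order_trans)
  then have "norm g * norm g \<le> L * norm g" by (simp add: power2_norm_eq_inner[symmetric] power2_eq_square)
  moreover have "0 \<le> L" by (rule lipschitz_on_nonneg[OF lip])
  ultimately show ?thesis
    by (cases "norm g = 0") (simp, metis mult_right_le_imp_le norm_ge_zero order_le_less)
qed


lemma dir_deriv_line:
  fixes f :: "'a::euclidean_space \<Rightarrow> real"
  assumes hd: "has_hadamard_dd f y d v" and a: "0 < a"
  shows "((\<lambda>t. (f (y + t *\<^sub>R (a *\<^sub>R d)) - f y) / t) \<longlongrightarrow> a * v) (at_right 0)"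
proof -
  have c: "((\<lambda>t. (1 / t) *\<^sub>R ((y + t *\<^sub>R d) - y)) \<longlongrightarrow> d) (at_right 0)"
  proof (rule tendsto_eventually)
    show "\<forall>\<^sub>F t in at_right (0::real). (1 / t) *\<^sub>R ((y + t *\<^sub>R d) - y) = d"
      by (simp add: eventually_at_right_less eventually_mono[OF eventually_at_right_less])
  qed
  have l1: "((\<lambda>t. (f (y + t *\<^sub>R d) - f y) / t) \<longlongrightarrow> v) (at_right 0)"
    using hd c unfolding has_hadamard_dd_def by (auto elim!: allE[of _ "\<lambda>t. y + t *\<^sub>R d"])
  have fl: "filterlim (\<lambda>t. a * t) (at_right 0) (at_right (0::real))"
  proof (rule tendsto_imp_filterlim_at_right)
    show "((\<lambda>t. a * t) \<longlongrightarrow> 0) (at_right 0)"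
      by (auto intro!: tendsto_eq_intros)
    show "\<forall>\<^sub>F t in at_right (0::real). 0 < a * t"
      using a by (intro eventually_mono[OF eventually_at_right_less]) simp
  qed
  have l2: "((\<lambda>t. (f (y + (a * t) *\<^sub>R d) - f y) / (a * t)) \<longlongrightarrow> v) (at_right 0)"
    using filterlim_compose[OF l1 fl] by simp
  have l3: "((\<lambda>t. a * ((f (y + (a * t) *\<^sub>R d) - f y) / (a * t))) \<longlongrightarrow> a * v) (at_right 0)"
    by (rule tendsto_mult_left[OF l2])
  show ?thesis
  proof (rule Lim_transform_eventually[OF l3])
    show "\<forall>\<^sub>F t in at_right 0. a * ((f (y + (a * t) *\<^sub>R d) - f y) / (a * t)) = (f (y + t *\<^sub>R (a *\<^sub>R d)) - f y) / t"
      using a by (intro always_eventually allI) (simp add: mult.commute)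
  qed
qed

lemma inner_step:
  fixes M :: "'a::euclidean_space measure" and F :: "'a \<Rightarrow> real"
  assumes M: "M \<in> space (prob_algebra borel)" and mu: "has_bochner_integral M (\<lambda>v. v) \<mu>"
    and var: "(\<integral>\<^sup>+v. ennreal ((norm (v - \<mu>))\<^sup>2) \<partial>M) \<le> ennreal (\<sigma>\<^sup>2)"
    and muL: "norm \<mu> \<le> L"
    and Fm: "F \<in> borel_measurable borel"
    and F0: "\<And>g. 0 \<le> F g"
    and Fle: "\<And>g. F g \<le> C + \<eta> * (m \<bullet> g) + \<kappa> * (norm (g - m))\<^sup>2"
    and \<kappa>: "0 \<le> \<kappa>"
  shows "(\<integral>\<^sup>+g. ennreal (F g) \<partial>M) \<le> ennreal (C + \<eta> * (m \<bullet> \<mu>) + \<kappa> * ((L + norm m)\<^sup>2 + \<sigma>\<^sup>2))"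
    and "0 \<le> C + \<eta> * (m \<bullet> \<mu>) + \<kappa> * ((L + norm m)\<^sup>2 + \<sigma>\<^sup>2)"
proof -
  have sM: "sets M = sets borel" and P: "prob_space M" using M by (auto simp: space_prob_algebra)
  interpret prob_space M by (rule P)
  have iv: "integrable M (\<lambda>v. v)" by (rule integrable.intros[OF mu])
  have ev: "(\<integral>v. v \<partial>M) = \<mu>" using mu by (rule has_bochner_integral_integral_eq)
  note vb = var_bound[OF M mu var, of m]
  define R where "R g = C + \<eta> * (m \<bullet> g) + \<kappa> * (norm (g - m))\<^sup>2" for g
  have iR: "integrable M R"
  proof -
    have "integrable M (\<lambda>g. m \<bullet> g)" using iv by (intro integrable_inner_right)
    then show ?thesis unfolding R_def using vb(1)
      by (intro Bochner_Integration.integrable_add integrable_mult_right) auto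
  qed
  have intR: "(\<integral>g. R g \<partial>M) = C + \<eta> * (m \<bullet> \<mu>) + \<kappa> * (\<integral>g. (norm (g - m))\<^sup>2 \<partial>M)"
  proof -
    have "integrable M (\<lambda>g. m \<bullet> g)" using iv by (intro integrable_inner_right)
    then show ?thesis unfolding R_def using vb(1) iv ev by (simp add: prob_space)
  qed
  have "(norm (\<mu> - m))\<^sup>2 \<le> (L + norm m)\<^sup>2"
  proof -
    have "norm (\<mu> - m) \<le> L + norm m" using norm_triangle_ineq4[of \<mu> m] muL by simp
    then show ?thesis by (simp add: power_mono)
  qed
  then have i2: "(\<integral>g. (norm (g - m))\<^sup>2 \<partial>M) \<le> (L + norm m)\<^sup>2 + \<sigma>\<^sup>2"
    using vb(2) by (simp add: norm_minus_commute)
  have le: "(\<integral>g. R g \<partial>M) \<le> C + \<eta> * (m \<bullet> \<mu>) + \<kappa> * ((L + norm m)\<^sup>2 + \<sigma>\<^sup>2)"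
    unfolding intR using i2 \<kappa> by (simp add: mult_left_mono)
  have R0: "0 \<le> R g" for g using F0[of g] Fle[of g] unfolding R_def by linarith
  have "(\<integral>\<^sup>+g. ennreal (F g) \<partial>M) \<le> (\<integral>\<^sup>+g. ennreal (R g) \<partial>M)"
    unfolding R_def by (intro nn_integral_mono ennreal_leI Fle)
  also have "\<dots> = ennreal (\<integral>g. R g \<partial>M)"
    by (rule nn_integral_eq_integral[OF iR]) (simp add: R0)
  also have "\<dots> \<le> ennreal (C + \<eta> * (m \<bullet> \<mu>) + \<kappa> * ((L + norm m)\<^sup>2 + \<sigma>\<^sup>2))"
    using le by (rule ennreal_leI)
  finally show "(\<integral>\<^sup>+g. ennreal (F g) \<partial>M) \<le> ennreal (C + \<eta> * (m \<bullet> \<mu>) + \<kappa> * ((L + norm m)\<^sup>2 + \<sigma>\<^sup>2))" .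
  have "0 \<le> (\<integral>g. R g \<partial>M)" by (rule integral_nonneg_AE) (simp add: R0)
  then show "0 \<le> C + \<eta> * (m \<bullet> \<mu>) + \<kappa> * ((L + norm m)\<^sup>2 + \<sigma>\<^sup>2)" using le by linarith
qed


definition Pt :: "('a::euclidean_space \<Rightarrow> real) \<Rightarrow> 'a \<Rightarrow> real \<Rightarrow> real \<Rightarrow> real \<Rightarrow> real \<Rightarrow> 'a \<times> 'a \<Rightarrow> real" where
  "Pt f x0 \<Delta> p q \<beta> s = f (fst s) - f x0 + \<Delta> + Psi p q (norm (snd s)) / (2 * (1 - \<beta>))"

lemma norm_comb:
  fixes m g :: "'a::real_inner"
  shows "(norm (\<beta> *\<^sub>R m + (1 - \<beta>) *\<^sub>R g))\<^sup>2 = (norm m)\<^sup>2 + 2 * (1 - \<beta>) * (m \<bullet> g - (norm m)\<^sup>2) + (1 - \<beta>)\<^sup>2 * (norm (g - m))\<^sup>2"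
proof -
  have e: "\<beta> *\<^sub>R m + (1 - \<beta>) *\<^sub>R g = m + (1 - \<beta>) *\<^sub>R (g - m)" by (simp add: algebra_simps)
  show ?thesis unfolding e power2_norm_eq_inner
    by (simp add: inner_add_left inner_add_right inner_diff_left inner_diff_right
        inner_commute power2_eq_square algebra_simps)
qed

lemma step_bound:
  fixes f :: "'a::euclidean_space \<Rightarrow> real" and Orc :: "'a \<Rightarrow> 'a \<Rightarrow> 'a measure"
  assumes lip: "lipschitz_on L UNIV f"
    and gap: "\<forall>x. f x0 - f x \<le> \<Delta>"
    and OrcP: "\<And>z d. Orc z d \<in> space (prob_algebra borel)"
    and orc_meas: "(\<lambda>(x, d). Orc x d) \<in> borel \<rightarrow>\<^sub>M prob_algebra borel"
    and mu_def: "\<And>z d. mu z d = (\<integral>v. v \<partial>Orc z d)"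
    and mu_int: "\<And>z d. has_bochner_integral (Orc z d) (\<lambda>v. v) (mu z d)"
    and mu_L: "\<And>z d. norm (mu z d) \<le> L"
    and mu_hd: "\<And>z d. has_hadamard_dd f z d (mu z d \<bullet> d)"
    and mu_var: "\<And>z d. (\<integral>\<^sup>+ v. ennreal ((norm (v - mu z d))\<^sup>2) \<partial>(Orc z d)) \<le> ennreal (\<sigma>\<^sup>2)"
    and \<beta>: "0 < \<beta>" "\<beta> < 1" and p: "0 < p" and q: "0 < q"
  shows "(\<integral>\<^sup>+ s. ennreal (Pt f x0 \<Delta> p q \<beta> s) \<partial>ingd_step Orc p q \<beta> (x, m))
          \<le> ennreal (Pt f x0 \<Delta> p q \<beta> (x, m) - (norm m)\<^sup>2 / (p * norm m + q)
                     + (1 - \<beta>) / 2 * (1 / (p * norm m + q)) * ((L + norm m)\<^sup>2 + \<sigma>\<^sup>2))"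
    and "0 \<le> Pt f x0 \<Delta> p q \<beta> (x, m) - (norm m)\<^sup>2 / (p * norm m + q)
                     + (1 - \<beta>) / 2 * (1 / (p * norm m + q)) * ((L + norm m)\<^sup>2 + \<sigma>\<^sup>2)"
proof -
  define \<eta> where "\<eta> = 1 / (p * norm m + q)"
  have \<eta>: "0 < \<eta>" unfolding \<eta>_def using p q by (intro divide_pos_pos add_nonneg_pos) auto
  define x' where "x' = x - \<eta> *\<^sub>R m"
  define h where "h = x' - x"
  have h: "h = \<eta> *\<^sub>R (- m)" unfolding h_def x'_def by simp
  define yu where "yu u = x + u *\<^sub>R h" for u :: real
  define U where "U = uniform_measure lborel {0..1::real}"
  define K0 where "K0 = (1 - \<beta>) / 2 * \<eta> * ((L + norm m)\<^sup>2 + \<sigma>\<^sup>2)"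
  define C where "C = Pt f x0 \<Delta> p q \<beta> (x, m) + f x' - f x - \<eta> * (norm m)\<^sup>2"
  define F where "F g = Pt f x0 \<Delta> p q \<beta> (x', \<beta> *\<^sub>R m + (1 - \<beta>) *\<^sub>R g)" for g
  have L0: "0 \<le> L" by (rule lipschitz_on_nonneg[OF lip])
  have Lf: "\<And>a b. dist (f a) (f b) \<le> L * dist a b" using lip by (auto simp: lipschitz_on_def)
  have fcont: "continuous_on UNIV f" by (rule lipschitz_on_continuous_on[OF lip])
  have fm[measurable]: "f \<in> borel_measurable borel" by (rule borel_measurable_continuous_onI[OF fcont])
  have Ptm[measurable]: "Pt f x0 \<Delta> p q \<beta> \<in> borel_measurable borel"
    unfolding Pt_def Psi_def borel_prod[symmetric] by measurable
  have Pt0: "0 \<le> Pt f x0 \<Delta> p q \<beta> s" for s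
  proof -
    have "0 \<le> Psi p q (norm (snd s))" by (rule Psi_nonneg[OF p q]) simp
    moreover have "0 \<le> f (fst s) - f x0 + \<Delta>" using gap[rule_format, of "fst s"] by linarith
    ultimately show ?thesis unfolding Pt_def using \<beta> by (simp add: divide_nonneg_pos)
  qed
  have O: "(\<lambda>x. Orc (fst x) (snd x)) \<in> borel \<Otimes>\<^sub>M borel \<rightarrow>\<^sub>M prob_algebra borel"
    using orc_meas by (simp add: case_prod_beta' borel_prod)
  have Y: "(\<lambda>u. (yu u, - m)) \<in> (borel :: real measure) \<rightarrow>\<^sub>M borel \<Otimes>\<^sub>M borel"
    unfolding yu_def by measurable
  have Ku: "(\<lambda>u. Orc (yu u) (- m)) \<in> (borel :: real measure) \<rightarrow>\<^sub>M prob_algebra borel"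
    using measurable_compose[OF Y O] by simp
  have Rm: "(\<lambda>g. return borel (x', \<beta> *\<^sub>R m + (1 - \<beta>) *\<^sub>R g)) \<in> (borel :: 'a measure) \<rightarrow>\<^sub>M prob_algebra borel"
    by (rule measurable_compose[OF _ measurable_return_prob_space]) measurable
  have Rm2: "(\<lambda>(u, g). return borel (x', \<beta> *\<^sub>R m + (1 - \<beta>) *\<^sub>R g)) \<in> (borel :: real measure) \<Otimes>\<^sub>M (borel :: 'a measure) \<rightarrow>\<^sub>M prob_algebra borel"
    using measurable_compose[OF measurable_snd Rm] by (simp add: case_prod_beta')
  have K1: "(\<lambda>u. Orc (yu u) (- m) \<bind> (\<lambda>g. return borel (x', \<beta> *\<^sub>R m + (1 - \<beta>) *\<^sub>R g))) \<in> (borel :: real measure) \<rightarrow>\<^sub>M prob_algebra borel"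
    by (rule measurable_bind_prob_space2[OF Ku Rm2])
  have K1U: "(\<lambda>u. Orc (yu u) (- m) \<bind> (\<lambda>g. return borel (x', \<beta> *\<^sub>R m + (1 - \<beta>) *\<^sub>R g))) \<in> U \<rightarrow>\<^sub>M subprob_algebra borel"
    using measurable_prob_algebraD[OF K1] unfolding U_def by (simp cong: measurable_cong_sets)
  have step_eq: "ingd_step Orc p q \<beta> (x, m) = U \<bind> (\<lambda>u. Orc (yu u) (- m) \<bind> (\<lambda>g. return borel (x', \<beta> *\<^sub>R m + (1 - \<beta>) *\<^sub>R g)))"
    unfolding ingd_step_def Let_def U_def yu_def h_def x'_def \<eta>_def by simp
  have inner_eq: "(\<integral>\<^sup>+ s. ennreal (Pt f x0 \<Delta> p q \<beta> s) \<partial>(Orc (yu u) (- m) \<bind> (\<lambda>g. return borel (x', \<beta> *\<^sub>R m + (1 - \<beta>) *\<^sub>R g))))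
      = (\<integral>\<^sup>+ g. ennreal (F g) \<partial>Orc (yu u) (- m))" for u
  proof -
    have sO: "sets (Orc (yu u) (- m)) = sets borel" using OrcP by (simp add: space_prob_algebra)
    have "(\<lambda>g. return borel (x', \<beta> *\<^sub>R m + (1 - \<beta>) *\<^sub>R g)) \<in> Orc (yu u) (- m) \<rightarrow>\<^sub>M subprob_algebra borel"
      using measurable_prob_algebraD[OF Rm] sO by (simp cong: measurable_cong_sets)
    then show ?thesis
      by (simp add: nn_integral_bind[where B=borel] nn_integral_return F_def)
  qed
  define B where "B u = C + \<eta> * (m \<bullet> mu (yu u) (- m)) + (1 - \<beta>) / 2 * \<eta> * ((L + norm m)\<^sup>2 + \<sigma>\<^sup>2)" for u
  have Fle: "F g \<le> C + \<eta> * (m \<bullet> g) + (1 - \<beta>) / 2 * \<eta> * (norm (g - m))\<^sup>2" for g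
  proof -
    define m' where "m' = \<beta> *\<^sub>R m + (1 - \<beta>) *\<^sub>R g"
    have k: "((norm m)\<^sup>2 - (norm m')\<^sup>2) / (p * norm m + q) \<le> Psi p q (norm m) - Psi p q (norm m')"
      by (rule Psi_key[OF p q]) auto
    have nc: "(norm m')\<^sup>2 = (norm m)\<^sup>2 + 2 * (1 - \<beta>) * (m \<bullet> g - (norm m)\<^sup>2) + (1 - \<beta>)\<^sup>2 * (norm (g - m))\<^sup>2"
      unfolding m'_def by (rule norm_comb)
    have A: "Psi p q (norm m') \<le> Psi p q (norm m) + \<eta> * (2 * (1 - \<beta>) * (m \<bullet> g - (norm m)\<^sup>2) + (1 - \<beta>)\<^sup>2 * (norm (g - m))\<^sup>2)"
      using k unfolding nc \<eta>_def by (simp add: diff_divide_distrib add_divide_distrib)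
    have b1: "0 < 1 - \<beta>" using \<beta> by simp
    have A2: "Psi p q (norm m') / (2 * (1 - \<beta>)) \<le> Psi p q (norm m) / (2 * (1 - \<beta>)) + \<eta> * (m \<bullet> g - (norm m)\<^sup>2) + (1 - \<beta>) / 2 * \<eta> * (norm (g - m))\<^sup>2"
    proof -
      have "Psi p q (norm m') / (2 * (1 - \<beta>)) \<le> (Psi p q (norm m) + \<eta> * (2 * (1 - \<beta>) * (m \<bullet> g - (norm m)\<^sup>2) + (1 - \<beta>)\<^sup>2 * (norm (g - m))\<^sup>2)) / (2 * (1 - \<beta>))"
        using A b1 by (intro divide_right_mono) auto
      also have "\<dots> = Psi p q (norm m) / (2 * (1 - \<beta>)) + \<eta> * (m \<bullet> g - (norm m)\<^sup>2) + (1 - \<beta>) / 2 * \<eta> * (norm (g - m))\<^sup>2"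
        using b1 by (simp add: field_simps power2_eq_square)
      finally show ?thesis .
    qed
    show ?thesis
      using A2 unfolding F_def C_def Pt_def m'_def[symmetric] by (simp add: algebra_simps)
  qed
  have ub: "(\<integral>\<^sup>+ g. ennreal (F g) \<partial>Orc (yu u) (- m)) \<le> ennreal (B u) \<and> 0 \<le> B u" for u
  proof -
    have k: "0 \<le> (1 - \<beta>) / 2 * \<eta>" using \<beta> \<eta> by simp
    have Fm: "F \<in> borel_measurable borel" unfolding F_def by measurable
    have F0: "0 \<le> F g" for g unfolding F_def by (rule Pt0)
    note I = inner_step[OF OrcP mu_int mu_var mu_L Fm F0 Fle k, of "yu u" "- m"]
    show ?thesis using I unfolding B_def by (simp add: algebra_simps)
  qed
  have mum: "(\<lambda>u. mu (yu u) (- m)) \<in> borel_measurable (borel :: real measure)"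
  proof -
    have "(\<lambda>u. integral\<^sup>L (Orc (yu u) (- m)) (\<lambda>v. v)) \<in> borel_measurable (borel :: real measure)"
      by (rule measurable_compose[OF measurable_prob_algebraD[OF Ku] integral_measurable_subprob_algebra]) simp
    then show ?thesis by (simp add: mu_def)
  qed
  have Bm: "B \<in> borel_measurable borel" unfolding B_def using mum by measurable
  define D where "D u = \<eta> * (mu (yu u) (- m) \<bullet> (- m))" for u
  have BD: "B u = (C + (1 - \<beta>) / 2 * \<eta> * ((L + norm m)\<^sup>2 + \<sigma>\<^sup>2)) - D u" for u
    unfolding B_def D_def by (simp add: inner_commute)
  have Dint: "(D has_integral (f x' - f x)) {0..1}"
  proof -
    define \<phi> where "\<phi> u = f (x + u *\<^sub>R h)" for u
    have "(D has_integral (\<phi> 1 - \<phi> 0)) {0..1}"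
    proof (rule ftc_right[where K = "L * norm h"])
      fix a b :: real
      have "dist (\<phi> a) (\<phi> b) \<le> L * dist (x + a *\<^sub>R h) (x + b *\<^sub>R h)" unfolding \<phi>_def by (rule Lf)
      also have "dist (x + a *\<^sub>R h) (x + b *\<^sub>R h) = \<bar>a - b\<bar> * norm h"
        by (simp add: dist_norm scaleR_diff_left[symmetric])
      finally show "\<bar>\<phi> a - \<phi> b\<bar> \<le> L * norm h * \<bar>a - b\<bar>" by (simp add: dist_real_def mult_ac)
    next
      fix u :: real assume "u \<in> {0..1}"
      have l: "((\<lambda>t. (f (yu u + t *\<^sub>R (\<eta> *\<^sub>R (- m))) - f (yu u)) / t) \<longlongrightarrow> \<eta> * (mu (yu u) (- m) \<bullet> (- m))) (at_right 0)"
        by (rule dir_deriv_line[OF mu_hd \<eta>])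
      have e: "\<phi> (u + t) = f (yu u + t *\<^sub>R (\<eta> *\<^sub>R (- m)))" for t
        unfolding \<phi>_def yu_def h[symmetric] by (simp add: scaleR_add_left add.assoc)
      have e2: "\<phi> u = f (yu u)" unfolding \<phi>_def yu_def ..
      show "((\<lambda>t. (\<phi> (u + t) - \<phi> u) / t) \<longlongrightarrow> D u) (at_right 0)"
        using l unfolding e e2 D_def .
    qed
    moreover have "\<phi> 1 = f x'" "\<phi> 0 = f x" unfolding \<phi>_def h_def by simp_all
    ultimately show ?thesis by simp
  qed
  define I where "I = (C + (1 - \<beta>) / 2 * \<eta> * ((L + norm m)\<^sup>2 + \<sigma>\<^sup>2)) - (f x' - f x)"
  have Bint: "(B has_integral I) {0..1}"
  proof -
    have "((\<lambda>u. C + (1 - \<beta>) / 2 * \<eta> * ((L + norm m)\<^sup>2 + \<sigma>\<^sup>2)) has_integral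
            (C + (1 - \<beta>) / 2 * \<eta> * ((L + norm m)\<^sup>2 + \<sigma>\<^sup>2))) {0..1::real}"
      using has_integral_const_real[of "C + (1 - \<beta>) / 2 * \<eta> * ((L + norm m)\<^sup>2 + \<sigma>\<^sup>2)" 0 "1::real"] by simp
    from has_integral_diff[OF this Dint] show ?thesis unfolding BD[abs_def] I_def by simp
  qed
  have B0: "0 \<le> B u" for u using ub by blast
  have I0: "0 \<le> I" using has_integral_nonneg[OF Bint] B0 by simp
  have BiI: "((\<lambda>u. indicator {0..1} u * B u) has_integral I) UNIV"
  proof -
    have "((\<lambda>u. if u \<in> {0..1} then B u else 0) has_integral I) UNIV"
      using Bint by (simp only: has_integral_restrict_UNIV)
    moreover have "(\<lambda>u. if u \<in> {0..1} then B u else 0) = (\<lambda>u. indicator {0..1} u * B u)"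
      by (auto simp: indicator_def)
    ultimately show ?thesis by simp
  qed
  have nnB: "(\<integral>\<^sup>+ u. ennreal (B u) \<partial>U) = ennreal I"
  proof -
    have "(\<integral>\<^sup>+ u. ennreal (B u) \<partial>U) = (\<integral>\<^sup>+ u. ennreal (B u) * indicator {0..1} u \<partial>lborel) / emeasure lborel {0..1::real}"
      unfolding U_def using Bm by (intro nn_integral_uniform_measure) auto
    also have "\<dots> = (\<integral>\<^sup>+ u. ennreal (B u) * indicator {0..1} u \<partial>lborel)"
      by (simp add: divide_ennreal_def)
    also have "\<dots> = (\<integral>\<^sup>+ u. ennreal (indicator {0..1} u * B u) \<partial>lborel)"
      by (intro nn_integral_cong) (auto simp: indicator_def)
    also have "\<dots> = ennreal I"
      by (rule nn_integral_has_integral_lborel[OF _ _ BiI]) (use Bm B0 in auto)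
    finally show ?thesis .
  qed
  have main: "(\<integral>\<^sup>+ s. ennreal (Pt f x0 \<Delta> p q \<beta> s) \<partial>ingd_step Orc p q \<beta> (x, m)) \<le> ennreal I"
  proof -
    have "(\<integral>\<^sup>+ s. ennreal (Pt f x0 \<Delta> p q \<beta> s) \<partial>ingd_step Orc p q \<beta> (x, m))
        = (\<integral>\<^sup>+ u. (\<integral>\<^sup>+ g. ennreal (F g) \<partial>Orc (yu u) (- m)) \<partial>U)"
    proof -
      have "(\<integral>\<^sup>+ s. ennreal (Pt f x0 \<Delta> p q \<beta> s) \<partial>ingd_step Orc p q \<beta> (x, m))
         = (\<integral>\<^sup>+ u. (\<integral>\<^sup>+ s. ennreal (Pt f x0 \<Delta> p q \<beta> s) \<partial>(Orc (yu u) (- m) \<bind> (\<lambda>g. return borel (x', \<beta> *\<^sub>R m + (1 - \<beta>) *\<^sub>R g)))) \<partial>U)"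
        unfolding step_eq by (rule nn_integral_bind[OF _ K1U]) measurable
      also have "\<dots> = (\<integral>\<^sup>+ u. (\<integral>\<^sup>+ g. ennreal (F g) \<partial>Orc (yu u) (- m)) \<partial>U)"
        by (rule nn_integral_cong) (rule inner_eq)
      finally show ?thesis .
    qed
    also have "\<dots> \<le> (\<integral>\<^sup>+ u. ennreal (B u) \<partial>U)"
      by (intro nn_integral_mono) (use ub in blast)
    finally show ?thesis unfolding nnB .
  qed
  have Ieq: "I = Pt f x0 \<Delta> p q \<beta> (x, m) - (norm m)\<^sup>2 / (p * norm m + q)
                     + (1 - \<beta>) / 2 * (1 / (p * norm m + q)) * ((L + norm m)\<^sup>2 + \<sigma>\<^sup>2)"
    unfolding I_def C_def \<eta>_def by (simp add: field_simps)
  show "(\<integral>\<^sup>+ s. ennreal (Pt f x0 \<Delta> p q \<beta> s) \<partial>ingd_step Orc p q \<beta> (x, m)) \<le> ennreal (Pt f x0 \<Delta> p q \<beta> (x, m) - (norm m)\<^sup>2 / (p * norm m + q) + (1 - \<beta>) / 2 * (1 / (p * norm m + q)) * ((L + norm m)\<^sup>2 + \<sigma>\<^sup>2))"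
    using main by (simp only: Ieq)
  show "0 \<le> Pt f x0 \<Delta> p q \<beta> (x, m) - (norm m)\<^sup>2 / (p * norm m + q) + (1 - \<beta>) / 2 * (1 / (p * norm m + q)) * ((L + norm m)\<^sup>2 + \<sigma>\<^sup>2)"
    using I0 by (simp only: Ieq)
qed


lemma arith_step:
  fixes \<beta> p q r L \<sigma> :: real
  assumes \<beta>: "0 < \<beta>" "\<beta> < 1" and p: "0 < p" and q: "0 < q" and r: "0 \<le> r" and L: "0 \<le> L"
  shows "(1 - \<beta>) / 2 * (1 / (p * r + q)) * ((L + r)\<^sup>2 + \<sigma>\<^sup>2) - r\<^sup>2 / (p * r + q)
         \<le> (1 - \<beta>) * ((1 + 1 / \<beta>) * L\<^sup>2 + \<sigma>\<^sup>2) / (2 * q) - (1 + \<beta>\<^sup>2) / 2 * (r\<^sup>2 / (p * r + q))"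
proof -
  define \<eta> where "\<eta> = 1 / (p * r + q)"
  have pr: "0 < p * r + q" using p q r by (intro add_nonneg_pos) auto
  have \<eta>0: "0 < \<eta>" unfolding \<eta>_def using pr by simp
  have \<eta>q: "\<eta> \<le> 1 / q" unfolding \<eta>_def using p q r pr by (intro divide_left_mono) auto
  have sq: "(L + r)\<^sup>2 \<le> (1 + 1 / \<beta>) * L\<^sup>2 + (1 + \<beta>) * r\<^sup>2"
  proof -
    have "0 \<le> (L - \<beta> * r)\<^sup>2 / \<beta>" using \<beta> by simp
    also have "(L - \<beta> * r)\<^sup>2 / \<beta> = L\<^sup>2 / \<beta> - 2 * L * r + \<beta> * r\<^sup>2"
      using \<beta> by (simp add: power2_eq_square field_simps)
    finally have "2 * L * r \<le> L\<^sup>2 / \<beta> + \<beta> * r\<^sup>2" by simp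
    then show ?thesis by (simp add: power2_eq_square algebra_simps)
  qed
  have b1: "0 \<le> (1 - \<beta>) / 2" using \<beta> by simp
  have X0: "0 \<le> (1 + 1 / \<beta>) * L\<^sup>2 + \<sigma>\<^sup>2" using \<beta> by (intro add_nonneg_nonneg mult_nonneg_nonneg) auto
  have "(1 - \<beta>) / 2 * \<eta> * ((L + r)\<^sup>2 + \<sigma>\<^sup>2) \<le> (1 - \<beta>) / 2 * \<eta> * (((1 + 1 / \<beta>) * L\<^sup>2 + \<sigma>\<^sup>2) + (1 + \<beta>) * r\<^sup>2)"
    using sq b1 \<eta>0 by (intro mult_left_mono) auto
  also have "\<dots> = (1 - \<beta>) / 2 * (\<eta> * ((1 + 1 / \<beta>) * L\<^sup>2 + \<sigma>\<^sup>2)) + (1 - \<beta>) * (1 + \<beta>) / 2 * (\<eta> * r\<^sup>2)"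
    by (simp add: field_simps)
  also have "\<dots> \<le> (1 - \<beta>) / 2 * ((1 / q) * ((1 + 1 / \<beta>) * L\<^sup>2 + \<sigma>\<^sup>2)) + (1 - \<beta>) * (1 + \<beta>) / 2 * (\<eta> * r\<^sup>2)"
    using \<eta>q X0 b1 by (intro add_right_mono mult_left_mono mult_right_mono) auto
  finally have "(1 - \<beta>) / 2 * \<eta> * ((L + r)\<^sup>2 + \<sigma>\<^sup>2) \<le> (1 - \<beta>) / 2 * ((1 / q) * ((1 + 1 / \<beta>) * L\<^sup>2 + \<sigma>\<^sup>2)) + (1 - \<beta>) * (1 + \<beta>) / 2 * (\<eta> * r\<^sup>2)" .
  moreover have E: "r\<^sup>2 / (p * r + q) = \<eta> * r\<^sup>2" unfolding \<eta>_def by simp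
  moreover have "(1 - \<beta>) * (1 + \<beta>) / 2 * (\<eta> * r\<^sup>2) - \<eta> * r\<^sup>2 = - ((1 + \<beta>\<^sup>2) / 2 * (\<eta> * r\<^sup>2))"
    by (simp add: power2_eq_square field_simps)
  moreover have "(1 - \<beta>) / 2 * ((1 / q) * ((1 + 1 / \<beta>) * L\<^sup>2 + \<sigma>\<^sup>2)) = (1 - \<beta>) * ((1 + 1 / \<beta>) * L\<^sup>2 + \<sigma>\<^sup>2) / (2 * q)"
    by simp
  ultimately show ?thesis unfolding \<eta>_def[symmetric] E by linarith
qed

lemma poly_key:
  fixes \<beta> X :: real
  assumes \<beta>: "0 < \<beta>" "\<beta> < 1" and X: "0 < X" "X \<le> 1"
  shows "X * \<beta> * (1 - 2 * \<beta> - 2 * \<beta>^3) \<le> (1 - \<beta>)\<^sup>2 * (1 - \<beta> + 2 * \<beta>\<^sup>2)"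
proof (cases "1 - 2 * \<beta> - 2 * \<beta>^3 \<le> 0")
  case True
  have "X * \<beta> * (1 - 2 * \<beta> - 2 * \<beta>^3) \<le> 0"
    using True X \<beta> by (intro mult_nonneg_nonpos) auto
  moreover have "0 \<le> (1 - \<beta>)\<^sup>2 * (1 - \<beta> + 2 * \<beta>\<^sup>2)"
    using \<beta> by (intro mult_nonneg_nonneg) auto
  ultimately show ?thesis by linarith
next
  case False
  have "X * \<beta> * (1 - 2 * \<beta> - 2 * \<beta>^3) \<le> 1 * \<beta> * (1 - 2 * \<beta> - 2 * \<beta>^3)"
    using False X \<beta> by (intro mult_right_mono) auto
  moreover have "0 \<le> (1 - 2 * \<beta>)\<^sup>2 + \<beta>\<^sup>2 * (4 * (\<beta> - 5/8)\<^sup>2 + 23/16)" by simp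
  moreover have "(1 - \<beta>)\<^sup>2 * (1 - \<beta> + 2 * \<beta>\<^sup>2) - 1 * \<beta> * (1 - 2 * \<beta> - 2 * \<beta>^3)
      = (1 - 2 * \<beta>)\<^sup>2 + \<beta>\<^sup>2 * (4 * (\<beta> - 5/8)\<^sup>2 + 23/16)"
    by (simp add: power2_eq_square power3_eq_cube algebra_simps)
  ultimately show ?thesis by linarith
qed

lemma arith_final:
  fixes \<beta> q \<Delta> L \<sigma> G :: real and T :: nat
  assumes \<beta>: "0 < \<beta>" "\<beta> < 1" and q: "0 < q" and \<Delta>: "0 \<le> \<Delta>" and G: "G\<^sup>2 = L\<^sup>2 + \<sigma>\<^sup>2" and T: "1 \<le> T"
  shows "1 / real T * (q / ((1 + \<beta>\<^sup>2) / 2)) * (\<Delta> + G\<^sup>2 / (2 * q * (1 - \<beta>)) + real T * ((1 - \<beta>) * ((1 + 1 / \<beta>) * L\<^sup>2 + \<sigma>\<^sup>2) / (2 * q)))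
         \<le> 4 * q * \<Delta> / real T + 2 * \<beta> * G\<^sup>2 / (real T * (1 - \<beta>)) + 2 * (1 - \<beta>) * G\<^sup>2 / \<beta>"
proof -
  define X where "X = 1 / real T"
  define g where "g = G\<^sup>2"
  define c where "c = (1 + \<beta>\<^sup>2) / 2"
  have X: "0 < X" "X \<le> 1" "X * real T = 1" using T unfolding X_def by auto
  have bb: "0 \<le> \<beta>\<^sup>2" by simp
  have bb2: "0 < 1 + \<beta>\<^sup>2" using add_pos_nonneg[OF zero_less_one bb] .
  have c1: "1 / 2 \<le> c" unfolding c_def by simp
  have c: "1 / 2 \<le> c" "0 < c" using c1 by auto
  have g: "0 \<le> g" unfolding g_def by simp
  have b1: "0 < 1 - \<beta>" using \<beta> by simp
  define K where "K = (1 - \<beta>) * ((1 + 1 / \<beta>) * L\<^sup>2 + \<sigma>\<^sup>2) / (2 * q)"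
  have Kle: "K \<le> (1 - \<beta>) * ((1 + 1 / \<beta>) * g) / (2 * q)"
  proof -
    have "(1 + 1 / \<beta>) * L\<^sup>2 + \<sigma>\<^sup>2 \<le> (1 + 1 / \<beta>) * g"
      unfolding g_def G using \<beta> by (simp add: algebra_simps)
    then show ?thesis unfolding K_def using b1 q by (intro divide_right_mono mult_left_mono) auto
  qed
  have L1: "X * (q / c) * \<Delta> \<le> 4 * q * \<Delta> / real T"
  proof -
    have "X * (q / c) * \<Delta> \<le> X * (2 * q) * \<Delta>"
      using c q X \<Delta> by (intro mult_right_mono mult_left_mono) (auto simp: field_simps)
    also have "\<dots> = (2 * q * \<Delta>) / real T" unfolding X_def by simp
    also have "\<dots> \<le> 4 * q * \<Delta> / real T" using q \<Delta> by (intro divide_right_mono) auto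
    finally show ?thesis .
  qed
  have L23: "X * (q / c) * (g / (2 * q * (1 - \<beta>))) + (q / c) * K \<le> 2 * \<beta> * g / (real T * (1 - \<beta>)) + 2 * (1 - \<beta>) * g / \<beta>"
  proof -
    have "(q / c) * K \<le> (q / c) * ((1 - \<beta>) * ((1 + 1 / \<beta>) * g) / (2 * q))"
      using Kle c q by (intro mult_left_mono) auto
    also have "\<dots> = ((1 - \<beta>) * ((1 + 1 / \<beta>) * g)) / (2 * c)"
      using q c by (simp add: field_simps)
    also have "2 * c = 1 + \<beta>\<^sup>2" unfolding c_def by simp
    also have "(1 - \<beta>) * ((1 + 1 / \<beta>) * g) = (1 - \<beta>) * (1 + \<beta>) * g / \<beta>"
      using \<beta> by (simp add: field_simps)
    also have "(1 - \<beta>) * (1 + \<beta>) * g / \<beta> / (1 + \<beta>\<^sup>2) = (1 - \<beta>) * (1 + \<beta>) * g / (\<beta> * (1 + \<beta>\<^sup>2))"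
      by simp
    finally have a: "(q / c) * K \<le> (1 - \<beta>) * (1 + \<beta>) * g / (\<beta> * (1 + \<beta>\<^sup>2))" .
    have "X * (q / c) * (g / (2 * q * (1 - \<beta>))) = X * g / ((2 * c) * (1 - \<beta>))"
      using q c b1 by (simp add: field_simps)
    also have "2 * c = 1 + \<beta>\<^sup>2" unfolding c_def by simp
    finally have b: "X * (q / c) * (g / (2 * q * (1 - \<beta>))) = X * g / ((1 + \<beta>\<^sup>2) * (1 - \<beta>))" .
    have r: "2 * \<beta> * g / (real T * (1 - \<beta>)) = 2 * \<beta> * X * g / (1 - \<beta>)"
      unfolding X_def by simp
    have P: "X * \<beta> * (1 - 2 * \<beta> - 2 * \<beta>^3) \<le> (1 - \<beta>)\<^sup>2 * (1 - \<beta> + 2 * \<beta>\<^sup>2)"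
      by (rule poly_key[OF \<beta> X(1,2)])
    have D: "0 < \<beta> * (1 - \<beta>) * (1 + \<beta>\<^sup>2)" using \<beta> b1 by (intro mult_pos_pos) (auto simp: add_pos_nonneg)
    have main: "X * g / ((1 + \<beta>\<^sup>2) * (1 - \<beta>)) + (1 - \<beta>) * (1 + \<beta>) * g / (\<beta> * (1 + \<beta>\<^sup>2))
        \<le> 2 * \<beta> * X * g / (1 - \<beta>) + 2 * (1 - \<beta>) * g / \<beta>"
    proof -
      define a where "a = 1 - \<beta>"
      define b where "b = 1 + \<beta>\<^sup>2"
      have a0: "0 < a" unfolding a_def using \<beta> by simp
      have b0: "0 < b" unfolding b_def using bb2 .
      have num: "X * g * \<beta> + a\<^sup>2 * (1 + \<beta>) * g \<le> 2 * \<beta>\<^sup>2 * X * g * b + 2 * a\<^sup>2 * b * g"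
      proof -
        have "g * (X * \<beta> * (1 - 2 * \<beta> - 2 * \<beta>^3)) \<le> g * ((1 - \<beta>)\<^sup>2 * (1 - \<beta> + 2 * \<beta>\<^sup>2))"
          using P g by (rule mult_left_mono)
        moreover have "2 * \<beta>\<^sup>2 * X * g * b + 2 * a\<^sup>2 * b * g - (X * g * \<beta> + a\<^sup>2 * (1 + \<beta>) * g)
            = g * ((1 - \<beta>)\<^sup>2 * (1 - \<beta> + 2 * \<beta>\<^sup>2)) - g * (X * \<beta> * (1 - 2 * \<beta> - 2 * \<beta>^3))"
          unfolding a_def b_def by (simp add: algebra_simps power2_eq_square power3_eq_cube)
        ultimately show ?thesis by linarith
      qed
      have D: "0 < \<beta> * a * b" using \<beta> a0 b0 by simp
      have e1: "X * g / (b * a) + a * (1 + \<beta>) * g / (\<beta> * b) = (X * g * \<beta> + a\<^sup>2 * (1 + \<beta>) * g) / (\<beta> * a * b)"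
        using \<beta> a0 b0 by (simp add: field_simps power2_eq_square)
      have e2: "2 * \<beta> * X * g / a + 2 * a * g / \<beta> = (2 * \<beta>\<^sup>2 * X * g * b + 2 * a\<^sup>2 * b * g) / (\<beta> * a * b)"
        using \<beta> a0 b0 by (simp add: field_simps power2_eq_square)
      have "(X * g * \<beta> + a\<^sup>2 * (1 + \<beta>) * g) / (\<beta> * a * b) \<le> (2 * \<beta>\<^sup>2 * X * g * b + 2 * a\<^sup>2 * b * g) / (\<beta> * a * b)"
        using num D by (intro divide_right_mono) auto
      then have "X * g / (b * a) + a * (1 + \<beta>) * g / (\<beta> * b) \<le> 2 * \<beta> * X * g / a + 2 * a * g / \<beta>"
        unfolding e1 e2 .
      then show ?thesis unfolding a_def b_def .
    qed
    then show ?thesis using main a b r by linarith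
  qed
  have split: "1 / real T * (q / c) * (\<Delta> + g / (2 * q * (1 - \<beta>)) + real T * K)
     = X * (q / c) * \<Delta> + X * (q / c) * (g / (2 * q * (1 - \<beta>))) + (q / c) * K"
    using X(3) unfolding X_def[symmetric] by (simp add: algebra_simps)
  show ?thesis
    using L1 L23 split unfolding c_def g_def K_def by linarith
qed



theorem mainTheorem9:
  fixes f :: "'a::euclidean_space \<Rightarrow> real"
    and Orc :: "'a \<Rightarrow> 'a \<Rightarrow> 'a measure"
    and x0 :: 'a
    and \<Delta> L \<sigma> G \<beta> p q :: real
    and T :: nat
  assumes lip: "lipschitz_on L UNIV f"
    and hdd: "hadamard_dir_differentiable f"
    and gap: "\<forall>x. f x0 - f x \<le> \<Delta>"
    and orc_dist: "\<forall>x d. Orc x d \<in> space (prob_algebra borel)"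
    and orc_meas: "(\<lambda>(x, d). Orc x d) \<in> borel \<rightarrow>\<^sub>M prob_algebra borel"
    and orc: "\<forall>x d. \<exists>gx. gx \<in> clarke_subdiff f x
                     \<and> has_hadamard_dd f x d (gx \<bullet> d)
                     \<and> has_bochner_integral (Orc x d) (\<lambda>v. v) gx
                     \<and> (\<integral>\<^sup>+ v. ennreal ((norm (v - gx))\<^sup>2) \<partial>(Orc x d)) \<le> ennreal (\<sigma>\<^sup>2)"
    and G_def: "G = sqrt (L\<^sup>2 + \<sigma>\<^sup>2)"
    and \<beta>: "0 < \<beta>" "\<beta> < 1"
    and pq: "0 < p" "0 < q" "p * G / q \<le> \<beta> / 2"
    and T: "1 \<le> T"
  shows "ennreal (1 / real T) *
           (\<Sum>t<T. \<integral>\<^sup>+ s. ennreal (q * (norm (snd s))\<^sup>2 / (p * norm (snd s) + q))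
                      \<partial>(ingd_state Orc p q \<beta> x0 t))
         \<le> ennreal (4 * q * \<Delta> / real T + 2 * \<beta> * G\<^sup>2 / (real T * (1 - \<beta>))
                    + 2 * (1 - \<beta>) * G\<^sup>2 / \<beta>)"
proof -
  have p: "0 < p" and q: "0 < q" using pq by auto
  have L0: "0 \<le> L" by (rule lipschitz_on_nonneg[OF lip])
  have \<Delta>0: "0 \<le> \<Delta>" using gap[rule_format, of x0] by simp
  have G2: "G\<^sup>2 = L\<^sup>2 + \<sigma>\<^sup>2" unfolding G_def by simp
  have OrcP: "\<And>z d. Orc z d \<in> space (prob_algebra borel)" using orc_dist by blast
  define mu where "mu z d = (\<integral>v. v \<partial>Orc z d)" for z d
  have mu_all: "has_bochner_integral (Orc z d) (\<lambda>v. v) (mu z d) \<and> mu z d \<in> clarke_subdiff f z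
      \<and> has_hadamard_dd f z d (mu z d \<bullet> d) \<and> (\<integral>\<^sup>+ v. ennreal ((norm (v - mu z d))\<^sup>2) \<partial>(Orc z d)) \<le> ennreal (\<sigma>\<^sup>2)" for z d
  proof -
    obtain gx where gx: "gx \<in> clarke_subdiff f z" "has_hadamard_dd f z d (gx \<bullet> d)"
      "has_bochner_integral (Orc z d) (\<lambda>v. v) gx" "(\<integral>\<^sup>+ v. ennreal ((norm (v - gx))\<^sup>2) \<partial>(Orc z d)) \<le> ennreal (\<sigma>\<^sup>2)"
      using orc by blast
    have "mu z d = gx" unfolding mu_def using gx(3) by (rule has_bochner_integral_integral_eq)
    then show ?thesis using gx by simp
  qed
  have mu_int: "\<And>z d. has_bochner_integral (Orc z d) (\<lambda>v. v) (mu z d)" using mu_all by blast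
  have mu_hd: "\<And>z d. has_hadamard_dd f z d (mu z d \<bullet> d)" using mu_all by blast
  have mu_var: "\<And>z d. (\<integral>\<^sup>+ v. ennreal ((norm (v - mu z d))\<^sup>2) \<partial>(Orc z d)) \<le> ennreal (\<sigma>\<^sup>2)" using mu_all by blast
  have mu_L: "\<And>z d. norm (mu z d) \<le> L" using mu_all clarke_norm_le[OF lip] by blast
  define c where "c = (1 + \<beta>\<^sup>2) / 2"
  define K where "K = (1 - \<beta>) * ((1 + 1 / \<beta>) * L\<^sup>2 + \<sigma>\<^sup>2) / (2 * q)"
  define phi where "phi s = (norm (snd s))\<^sup>2 / (p * norm (snd s) + q)" for s :: "'a \<times> 'a"
  define P where "P = Pt f x0 \<Delta> p q \<beta>"
  define S where "S n = ingd_state Orc p q \<beta> x0 n" for n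
  have c0: "0 < c" unfolding c_def by (simp add: add_pos_nonneg)
  have K0: "0 \<le> K" unfolding K_def using \<beta> q by (intro divide_nonneg_pos mult_nonneg_nonneg add_nonneg_nonneg) auto
  have phi0: "0 \<le> phi s" for s unfolding phi_def using p q by (intro divide_nonneg_nonneg add_nonneg_nonneg) auto
  have fcont: "continuous_on UNIV f" by (rule lipschitz_on_continuous_on[OF lip])
  have fm[measurable]: "f \<in> borel_measurable borel" by (rule borel_measurable_continuous_onI[OF fcont])
  have Pm[measurable]: "P \<in> borel_measurable borel"
    unfolding P_def Pt_def Psi_def borel_prod[symmetric] by measurable
  have phim[measurable]: "phi \<in> borel_measurable borel"
    unfolding phi_def borel_prod[symmetric] by measurable
  have P0: "0 \<le> P s" for s
  proof -
    have "0 \<le> Psi p q (norm (snd s))" by (rule Psi_nonneg[OF p q]) simp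
    moreover have "0 \<le> f (fst s) - f x0 + \<Delta>" using gap[rule_format, of "fst s"] by linarith
    ultimately show ?thesis unfolding P_def Pt_def using \<beta> by (simp add: divide_nonneg_pos)
  qed
  have stepM: "ingd_step Orc p q \<beta> \<in> borel \<rightarrow>\<^sub>M prob_algebra borel" by (rule step_meas[OF orc_meas])
  have SP: "S n \<in> space (prob_algebra borel)" for n
  proof (induction n)
    case 0
    have "(\<lambda>g. (x0, g)) \<in> (borel :: 'a measure) \<rightarrow>\<^sub>M (borel :: ('a \<times> 'a) measure)"
      unfolding borel_prod[symmetric] by measurable
    from measurable_space[OF measurable_distr_prob_space[OF this] OrcP[of x0 0]]
    show ?case unfolding S_def by simp
  next
    case (Suc n)
    have "(\<lambda>x::nat. S n \<bind> ingd_step Orc p q \<beta>) \<in> count_space UNIV \<rightarrow>\<^sub>M prob_algebra borel"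
      by (rule measurable_bind_prob_space[OF measurable_const[OF Suc] stepM])
    from measurable_space[OF this, of 0] show ?case unfolding S_def by simp
  qed
  have Sprob: "prob_space (S n)" and Ssets: "sets (S n) = sets borel" for n
    using SP[of n] by (auto simp: space_prob_algebra)
  have pw: "(\<integral>\<^sup>+ s'. ennreal (P s') \<partial>ingd_step Orc p q \<beta> s) + ennreal (c * phi s) \<le> ennreal (P s + K)" for s
  proof -
    obtain x m where s: "s = (x, m)" by (cases s)
    define a1 where "a1 = Pt f x0 \<Delta> p q \<beta> (x, m) - (norm m)\<^sup>2 / (p * norm m + q)
                     + (1 - \<beta>) / 2 * (1 / (p * norm m + q)) * ((L + norm m)\<^sup>2 + \<sigma>\<^sup>2)"
    note sb = step_bound[OF lip gap OrcP orc_meas mu_def mu_int mu_L mu_hd mu_var \<beta> p q, of x m]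
    have b1: "(\<integral>\<^sup>+ s'. ennreal (P s') \<partial>ingd_step Orc p q \<beta> s) \<le> ennreal a1"
      using sb(1) unfolding s a1_def P_def .
    have a10: "0 \<le> a1" using sb(2) unfolding a1_def .
    have ar: "(1 - \<beta>) / 2 * (1 / (p * norm m + q)) * ((L + norm m)\<^sup>2 + \<sigma>\<^sup>2) - (norm m)\<^sup>2 / (p * norm m + q)
         \<le> K - c * ((norm m)\<^sup>2 / (p * norm m + q))"
      unfolding K_def c_def by (rule arith_step[OF \<beta> p q norm_ge_zero L0])
    have le: "a1 + c * phi s \<le> P s + K" unfolding a1_def P_def s phi_def using ar by simp
    have cphi: "0 \<le> c * phi s" using c0 phi0[of s] by simp
    have "(\<integral>\<^sup>+ s'. ennreal (P s') \<partial>ingd_step Orc p q \<beta> s) + ennreal (c * phi s) \<le> ennreal a1 + ennreal (c * phi s)"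
      using b1 by (rule add_right_mono)
    also have "\<dots> = ennreal (a1 + c * phi s)" using a10 cphi by (simp add: ennreal_plus)
    also have "\<dots> \<le> ennreal (P s + K)" using le by (rule ennreal_leI)
    finally show ?thesis .
  qed
  have recur: "(\<integral>\<^sup>+ s. ennreal (P s) \<partial>S (Suc n)) + (\<integral>\<^sup>+ s. ennreal (c * phi s) \<partial>S n)
        \<le> (\<integral>\<^sup>+ s. ennreal (P s) \<partial>S n) + ennreal K" for n
  proof -
    have stepS: "ingd_step Orc p q \<beta> \<in> S n \<rightarrow>\<^sub>M subprob_algebra borel"
      using measurable_prob_algebraD[OF stepM] Ssets[of n] by (simp cong: measurable_cong_sets)
    have m1: "(\<lambda>s. \<integral>\<^sup>+ s'. ennreal (P s') \<partial>ingd_step Orc p q \<beta> s) \<in> borel_measurable (S n)"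
      by (rule measurable_compose[OF stepS nn_integral_measurable_subprob_algebra]) measurable
    have m2: "(\<lambda>s. ennreal (c * phi s)) \<in> borel_measurable (S n)"
      using Ssets[of n] by (simp cong: measurable_cong_sets)
    have m3: "(\<lambda>s. ennreal (P s)) \<in> borel_measurable (S n)"
      using Ssets[of n] by (simp cong: measurable_cong_sets)
    have "(\<integral>\<^sup>+ s. ennreal (P s) \<partial>S (Suc n)) = (\<integral>\<^sup>+ s. (\<integral>\<^sup>+ s'. ennreal (P s') \<partial>ingd_step Orc p q \<beta> s) \<partial>S n)"
      unfolding S_def ingd_state.simps
      by (rule nn_integral_bind[OF _ stepS[unfolded S_def]]) measurable
    then have "(\<integral>\<^sup>+ s. ennreal (P s) \<partial>S (Suc n)) + (\<integral>\<^sup>+ s. ennreal (c * phi s) \<partial>S n)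
        = (\<integral>\<^sup>+ s. (\<integral>\<^sup>+ s'. ennreal (P s') \<partial>ingd_step Orc p q \<beta> s) + ennreal (c * phi s) \<partial>S n)"
      using nn_integral_add[OF m1 m2] by simp
    also have "\<dots> \<le> (\<integral>\<^sup>+ s. ennreal (P s + K) \<partial>S n)"
      by (intro nn_integral_mono pw)
    also have "\<dots> = (\<integral>\<^sup>+ s. ennreal (P s) + ennreal K \<partial>S n)"
      using P0 K0 by (intro nn_integral_cong) (simp add: ennreal_plus)
    also have "\<dots> = (\<integral>\<^sup>+ s. ennreal (P s) \<partial>S n) + ennreal K"
      using nn_integral_add[OF m3, of "\<lambda>_. ennreal K"] prob_space.emeasure_space_1[OF Sprob[of n]] by simp
    finally show ?thesis .
  qed
  have chain: "(\<integral>\<^sup>+ s. ennreal (P s) \<partial>S n) + (\<Sum>t<n. \<integral>\<^sup>+ s. ennreal (c * phi s) \<partial>S t)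
        \<le> (\<integral>\<^sup>+ s. ennreal (P s) \<partial>S 0) + of_nat n * ennreal K" for n
  proof (induction n)
    case 0
    then show ?case by simp
  next
    case (Suc n)
    have "(\<integral>\<^sup>+ s. ennreal (P s) \<partial>S (Suc n)) + (\<Sum>t<Suc n. \<integral>\<^sup>+ s. ennreal (c * phi s) \<partial>S t)
        = ((\<integral>\<^sup>+ s. ennreal (P s) \<partial>S (Suc n)) + (\<integral>\<^sup>+ s. ennreal (c * phi s) \<partial>S n))
          + (\<Sum>t<n. \<integral>\<^sup>+ s. ennreal (c * phi s) \<partial>S t)"
      by (simp add: ac_simps)
    also have "\<dots> \<le> ((\<integral>\<^sup>+ s. ennreal (P s) \<partial>S n) + ennreal K) + (\<Sum>t<n. \<integral>\<^sup>+ s. ennreal (c * phi s) \<partial>S t)"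
      using recur[of n] by (rule add_right_mono)
    also have "\<dots> = ((\<integral>\<^sup>+ s. ennreal (P s) \<partial>S n) + (\<Sum>t<n. \<integral>\<^sup>+ s. ennreal (c * phi s) \<partial>S t)) + ennreal K"
      by (simp add: ac_simps)
    also have "\<dots> \<le> ((\<integral>\<^sup>+ s. ennreal (P s) \<partial>S 0) + of_nat n * ennreal K) + ennreal K"
      using Suc.IH by (rule add_right_mono)
    also have "\<dots> = (\<integral>\<^sup>+ s. ennreal (P s) \<partial>S 0) + of_nat (Suc n) * ennreal K"
      by (simp add: algebra_simps)
    finally show ?case .
  qed
  have A0: "(\<integral>\<^sup>+ s. ennreal (P s) \<partial>S 0) \<le> ennreal (\<Delta> + G\<^sup>2 / (2 * q * (1 - \<beta>)))"
  proof -
    define M where "M = Orc x0 0"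
    have MP: "M \<in> space (prob_algebra borel)" unfolding M_def by (rule OrcP)
    have sM: "sets M = sets borel" and PM: "prob_space M" using MP by (auto simp: space_prob_algebra)
    interpret prob_space M by (rule PM)
    have b1: "0 < 1 - \<beta>" using \<beta> by simp
    define k where "k = 1 / (2 * q * (1 - \<beta>))"
    have k0: "0 \<le> k" unfolding k_def using q b1 by simp
    note vb = var_bound[OF MP mu_int[of x0 0, folded M_def] mu_var[of x0 0, folded M_def], of 0]
    have T0: "(\<lambda>g. (x0, g)) \<in> M \<rightarrow>\<^sub>M (borel :: ('a \<times> 'a) measure)"
      using sM unfolding borel_prod[symmetric] by (simp cong: measurable_cong_sets)
    have "(\<integral>\<^sup>+ s. ennreal (P s) \<partial>S 0) = (\<integral>\<^sup>+ g. ennreal (P (x0, g)) \<partial>M)"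
      unfolding S_def ingd_state.simps M_def[symmetric] by (rule nn_integral_distr[OF T0]) simp
    also have "\<dots> \<le> (\<integral>\<^sup>+ g. ennreal (\<Delta> + k * (norm (g - 0))\<^sup>2) \<partial>M)"
    proof (intro nn_integral_mono ennreal_leI)
      fix g :: 'a
      have "Psi p q (norm g) \<le> (norm g)\<^sup>2 / q" by (rule Psi_le[OF p q norm_ge_zero])
      then have "Psi p q (norm g) / (2 * (1 - \<beta>)) \<le> ((norm g)\<^sup>2 / q) / (2 * (1 - \<beta>))"
        using b1 by (intro divide_right_mono) auto
      also have "\<dots> = k * (norm (g - 0))\<^sup>2" unfolding k_def by simp
      finally show "P (x0, g) \<le> \<Delta> + k * (norm (g - 0))\<^sup>2" unfolding P_def Pt_def by simp
    qed
    also have "\<dots> = ennreal (\<integral>g. \<Delta> + k * (norm (g - 0))\<^sup>2 \<partial>M)"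
      using vb(1) \<Delta>0 k0 by (intro nn_integral_eq_integral) auto
    also have "(\<integral>g. \<Delta> + k * (norm (g - 0))\<^sup>2 \<partial>M) = \<Delta> + k * (\<integral>g. (norm (g - 0))\<^sup>2 \<partial>M)"
      using vb(1) by (simp add: prob_space)
    also have "\<dots> \<le> \<Delta> + k * ((norm (mu x0 0 - 0))\<^sup>2 + \<sigma>\<^sup>2)"
      using vb(2) k0 by (intro add_left_mono mult_left_mono) auto
    also have "\<dots> \<le> \<Delta> + k * G\<^sup>2"
    proof -
      have "(norm (mu x0 0))\<^sup>2 \<le> L\<^sup>2" using mu_L[of x0 0] by (intro power_mono) auto
      then show ?thesis unfolding G2 using k0 by (intro add_left_mono mult_left_mono) auto
    qed
    also have "\<Delta> + k * G\<^sup>2 = \<Delta> + G\<^sup>2 / (2 * q * (1 - \<beta>))" unfolding k_def by simp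
    finally show ?thesis by (simp add: ennreal_leI)
  qed
  define V where "V = \<Delta> + G\<^sup>2 / (2 * q * (1 - \<beta>)) + real T * K"
  have sumle: "(\<Sum>t<T. \<integral>\<^sup>+ s. ennreal (c * phi s) \<partial>S t) \<le> ennreal V"
  proof -
    have "(\<Sum>t<T. \<integral>\<^sup>+ s. ennreal (c * phi s) \<partial>S t) \<le> (\<integral>\<^sup>+ s. ennreal (P s) \<partial>S T) + (\<Sum>t<T. \<integral>\<^sup>+ s. ennreal (c * phi s) \<partial>S t)"
      by simp
    also have "\<dots> \<le> (\<integral>\<^sup>+ s. ennreal (P s) \<partial>S 0) + of_nat T * ennreal K" by (rule chain)
    also have "\<dots> \<le> ennreal (\<Delta> + G\<^sup>2 / (2 * q * (1 - \<beta>))) + ennreal (real T * K)"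
    proof -
      have "of_nat T * ennreal K = ennreal (real T * K)" using K0 by (simp add: ennreal_mult ennreal_of_nat_eq_real_of_nat)
      then show ?thesis using A0 by (intro add_mono) auto
    qed
    also have "\<dots> = ennreal V" unfolding V_def using \<Delta>0 q \<beta> K0
      by (intro ennreal_plus[symmetric] add_nonneg_nonneg divide_nonneg_pos mult_nonneg_nonneg) auto
    finally show ?thesis .
  qed
  have termeq: "(\<integral>\<^sup>+ s. ennreal (q * (norm (snd s))\<^sup>2 / (p * norm (snd s) + q)) \<partial>S t)
      = ennreal (q / c) * (\<integral>\<^sup>+ s. ennreal (c * phi s) \<partial>S t)" for t
  proof -
    have "(\<integral>\<^sup>+ s. ennreal (q * (norm (snd s))\<^sup>2 / (p * norm (snd s) + q)) \<partial>S t)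
        = (\<integral>\<^sup>+ s. ennreal (q / c) * ennreal (c * phi s) \<partial>S t)"
    proof (intro nn_integral_cong)
      fix s :: "'a \<times> 'a"
      have "q * (norm (snd s))\<^sup>2 / (p * norm (snd s) + q) = (q / c) * (c * phi s)"
        unfolding phi_def using c0 by simp
      then show "ennreal (q * (norm (snd s))\<^sup>2 / (p * norm (snd s) + q)) = ennreal (q / c) * ennreal (c * phi s)"
      proof -
        have "ennreal ((q / c) * (c * phi s)) = ennreal (q / c) * ennreal (c * phi s)"
          by (rule ennreal_mult) (use q c0 phi0[of s] in auto)
        with \<open>q * (norm (snd s))\<^sup>2 / (p * norm (snd s) + q) = (q / c) * (c * phi s)\<close> show ?thesis by simp
      qed
    qed
    also have "\<dots> = ennreal (q / c) * (\<integral>\<^sup>+ s. ennreal (c * phi s) \<partial>S t)"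
      by (rule nn_integral_cmult) (use Ssets[of t] in \<open>simp cong: measurable_cong_sets\<close>)
    finally show ?thesis .
  qed
  have "ennreal (1 / real T) * (\<Sum>t<T. \<integral>\<^sup>+ s. ennreal (q * (norm (snd s))\<^sup>2 / (p * norm (snd s) + q)) \<partial>S t)
      = ennreal (1 / real T) * (ennreal (q / c) * (\<Sum>t<T. \<integral>\<^sup>+ s. ennreal (c * phi s) \<partial>S t))"
    by (simp add: termeq sum_distrib_left)
  also have "\<dots> \<le> ennreal (1 / real T) * (ennreal (q / c) * ennreal V)"
    by (intro mult_left_mono sumle) auto
  also have "\<dots> = ennreal (1 / real T * (q / c) * V)"
  proof -
    have V0: "0 \<le> V" unfolding V_def using \<Delta>0 q \<beta> K0
      by (intro add_nonneg_nonneg divide_nonneg_pos mult_nonneg_nonneg) auto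
    have e1: "ennreal ((q / c) * V) = ennreal (q / c) * ennreal V"
      by (rule ennreal_mult) (use q c0 V0 in auto)
    have e2: "ennreal (1 / real T * ((q / c) * V)) = ennreal (1 / real T) * ennreal ((q / c) * V)"
      by (rule ennreal_mult) (use q c0 V0 in auto)
    show ?thesis by (simp only: e1 e2 mult.assoc)
  qed
  also have "\<dots> \<le> ennreal (4 * q * \<Delta> / real T + 2 * \<beta> * G\<^sup>2 / (real T * (1 - \<beta>)) + 2 * (1 - \<beta>) * G\<^sup>2 / \<beta>)"
    using arith_final[OF \<beta> q \<Delta>0 G2 T] unfolding V_def K_def c_def by (rule ennreal_leI)
  finally show ?thesis unfolding S_def .
qed
end
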